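(* For any $\mathbf a=(a,\alpha)\in\mathbb R^2$ and $\varepsilon\ge0$, every minimiser of $\Sigma^\varepsilon_f$ over $H^2_{\mathbf a}$ belongs to $\{\bar h\}\cup\{h_\ell:\ell\in(0,1)\}$, where $\bar h(t)=a+\alpha t$ and $h_\ell(t)=h^{*,(0,\ell)}_{(\mathbf a,\mathbf 0)}(t)$ for $t\in[0,\ell)$, $h_\ell(t)=0$ for $t\in[\ell,1]$.
   Context: $H^2_{\mathbf a}=\{h\in H^2([0,1]):h(0)=a,\dot h(0)=\alpha\}$. $\tau(\varepsilon)\ge0$ is the pinning free energy (a fixed nonnegative number for each $\varepsilon$). $\Sigma^\varepsilon_f(h)=\frac12\int_0^1\ddot h^2\,dt-\tau(\varepsilon)|\{t\in[0,1]:h(t)=0\}|$ on $H^2_{\mathbf a}$. For an interval $I=(0,\ell)$, $h^{*,(0,\ell)}_{(\mathbf a,\mathbf 0)}$ is the unique minimiser of $\frac12\int_0^\ell\ddot h^2\,dt$ among $h\in H^2((0,\ell))$ with $h(0)=a,\dot h(0)=\alpha,h(\ell)=0,\dot h(\ell)=0$ (a cubic polynomial). *)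

theory Defs
  imports "HOL-Analysis.Analysis"
begin

text \<open>Sobolev space H^2 on an interval [0,L], via the standard characterisation on an
interval: h has an absolutely continuous derivative h1 whose a.e. derivative h2 lies in L^2.
Concretely h1 t = h1 0 + int_0^t h2 and h t = h 0 + int_0^t h1 on [0,L],
with h2 square-integrable (hence integrable) on [0,L].\<close>

definition H2_weak :: "real \<Rightarrow> (real \<Rightarrow> real) \<Rightarrow> (real \<Rightarrow> real) \<Rightarrow> (real \<Rightarrow> real) \<Rightarrow> bool" where
  "H2_weak L h h1 h2 \<longleftrightarrow>
     integrable (lebesgue_on {0..L}) h2 \<and>
     integrable (lebesgue_on {0..L}) (\<lambda>t. (h2 t)\<^sup>2) \<and>
     (\<forall>t\<in>{0..L}. h1 t = h1 0 + integral\<^sup>L (lebesgue_on {0..t}) h2) \<and>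
     (\<forall>t\<in>{0..L}. h t = h 0 + integral\<^sup>L (lebesgue_on {0..t}) h1)"

text \<open>Bending energy (1/2) int_0^L (h'')^2; h'' is determined a.e., so the choice is irrelevant.\<close>
definition bending :: "real \<Rightarrow> (real \<Rightarrow> real) \<Rightarrow> real" where
  "bending L h = (let h2 = (SOME h2. \<exists>h1. H2_weak L h h1 h2)
                  in integral\<^sup>L (lebesgue_on {0..L}) (\<lambda>t. (h2 t)\<^sup>2) / 2)"

definition H2a :: "real \<Rightarrow> real \<Rightarrow> (real \<Rightarrow> real) set" where
  "H2a a \<alpha> = {h. \<exists>h1 h2. H2_weak 1 h h1 h2 \<and> h 0 = a \<and> h1 0 = \<alpha>}"

definition Sigma_f :: "real \<Rightarrow> (real \<Rightarrow> real) \<Rightarrow> real" where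
  "Sigma_f \<tau> h = bending 1 h - \<tau> * measure lebesgue {t\<in>{0..1}. h t = 0}"

definition is_minimiser :: "real \<Rightarrow> real \<Rightarrow> real \<Rightarrow> (real \<Rightarrow> real) \<Rightarrow> bool" where
  "is_minimiser \<tau> a \<alpha> h \<longleftrightarrow> h \<in> H2a a \<alpha> \<and> (\<forall>g\<in>H2a a \<alpha>. Sigma_f \<tau> h \<le> Sigma_f \<tau> g)"

definition H2_clamped :: "real \<Rightarrow> real \<Rightarrow> real \<Rightarrow> (real \<Rightarrow> real) set" where
  "H2_clamped l a \<alpha> = {h. \<exists>h1 h2. H2_weak l h h1 h2 \<and> h 0 = a \<and> h1 0 = \<alpha> \<and> h l = 0 \<and> h1 l = 0}"

definition is_clamped_min :: "real \<Rightarrow> real \<Rightarrow> real \<Rightarrow> (real \<Rightarrow> real) \<Rightarrow> bool" where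
  "is_clamped_min l a \<alpha> c \<longleftrightarrow> c \<in> H2_clamped l a \<alpha> \<and> (\<forall>g\<in>H2_clamped l a \<alpha>. bending l c \<le> bending l g)"

end

theory Submission
  imports Defs
begin

lemma enn_eq_helper: "(a::ennreal) \<noteq> \<infinity> \<Longrightarrow> b \<noteq> \<infinity> \<Longrightarrow> enn2real a = enn2real b \<Longrightarrow> a = b"
proof -
  assume a: "a \<noteq> \<infinity>" and b: "b \<noteq> \<infinity>" and e: "enn2real a = enn2real b"
  have "a = ennreal (enn2real a)" using a by (simp add: less_top)
  also have "\<dots> = ennreal (enn2real b)" using e by simp
  also have "\<dots> = b" using b by (simp add: less_top)
  finally show "a = b" .
qed

lemma ae_zero_lborel:
  fixes f :: "real \<Rightarrow> real"
  assumes fm[measurable]: "f \<in> borel_measurable borel" and fi: "integrable lborel f"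
    and z: "\<And>x. integral\<^sup>L lborel (\<lambda>y. indicator {x<..} y * f y) = 0"
  shows "AE x in lborel. f x = 0"
proof -
  let ?M = "density lborel (\<lambda>x. ennreal (f x))"
  let ?N = "density lborel (\<lambda>x. ennreal (- f x))"
  have eqm: "?M = ?N"
  proof (rule measure_eqI_lessThan)
    show "sets ?M = sets borel" "sets ?N = sets borel" by auto
    fix x :: real
    have ii: "integrable lborel (\<lambda>y. indicator {x<..} y * f y)"
      using integrable_mult_indicator[of "{x<..}" lborel f] fi by simp
    have e1: "emeasure ?M {x<..} = (\<integral>\<^sup>+ y. ennreal (indicator {x<..} y * f y) \<partial>lborel)"
      by (subst emeasure_density) (auto intro!: nn_integral_cong simp: indicator_def ennreal_mult')
    have e2: "emeasure ?N {x<..} = (\<integral>\<^sup>+ y. ennreal (- (indicator {x<..} y * f y)) \<partial>lborel)"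
      by (subst emeasure_density) (auto intro!: nn_integral_cong simp: indicator_def)
    have f1: "(\<integral>\<^sup>+ y. ennreal (indicator {x<..} y * f y) \<partial>lborel) \<noteq> \<infinity>"
      and f2: "(\<integral>\<^sup>+ y. ennreal (- (indicator {x<..} y * f y)) \<partial>lborel) \<noteq> \<infinity>"
      using integrableD[OF ii] by auto
    have "enn2real (\<integral>\<^sup>+ y. ennreal (indicator {x<..} y * f y) \<partial>lborel)
        = enn2real (\<integral>\<^sup>+ y. ennreal (- (indicator {x<..} y * f y)) \<partial>lborel)"
      using real_lebesgue_integral_def[OF ii] z[of x] by simp
    then have "(\<integral>\<^sup>+ y. ennreal (indicator {x<..} y * f y) \<partial>lborel)
        = (\<integral>\<^sup>+ y. ennreal (- (indicator {x<..} y * f y)) \<partial>lborel)"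
      using f1 f2 by (rule enn_eq_helper[rotated 2])
    then show "emeasure ?M {x<..} = emeasure ?N {x<..}" using e1 e2 by simp
    show "emeasure ?M {x<..} < \<infinity>" using e1 f1 by (simp add: less_top)
  qed
  have "AE x in lborel. ennreal (f x) = ennreal (- f x)"
    by (rule sigma_finite_measure.density_unique[OF sigma_finite_lborel]) (use eqm in auto)
  then show ?thesis
    by eventually_elim (smt (verit) ennreal_eq_0_iff ennreal_neg)
qed

lemma restr_integral:
  fixes d :: "real \<Rightarrow> real"
  assumes "S \<in> sets lebesgue"
  shows "integral\<^sup>L (lebesgue_on S) d = integral\<^sup>L lebesgue (\<lambda>x. indicator S x * d x)"
  using integral_restrict_space[of S lebesgue d] assms by simp

lemma restr_integrable:
  fixes d :: "real \<Rightarrow> real"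
  assumes "S \<in> sets lebesgue"
  shows "integrable (lebesgue_on S) d \<longleftrightarrow> integrable lebesgue (\<lambda>x. indicator S x * d x)"
  using integrable_restrict_space[of S lebesgue d] assms by simp

lemma ae_zero_interval:
  fixes d :: "real \<Rightarrow> real"
  assumes di: "integrable (lebesgue_on {0..L}) d"
    and z: "\<forall>t\<in>{0..L}. integral\<^sup>L (lebesgue_on {0..t}) d = 0"
  shows "AE x in lebesgue_on {0..L}. d x = 0"
proof -
  define f0 where "f0 = (\<lambda>x. indicator {0..L} x * d x)"
  have i0: "integrable lebesgue f0"
    using di restr_integrable[of "{0..L}" d] by (simp add: f0_def)
  then have "f0 \<in> borel_measurable lebesgue" by auto
  then obtain g where gm: "g \<in> borel_measurable lborel" and ae: "AE x in lborel. f0 x = g x"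
    using completion_ex_borel_measurable_real by blast
  have aeL: "AE x in lebesgue. f0 x = g x" using ae by (rule AE_completion)
  have giL: "integrable lebesgue g"
    using integrable_cong_AE_imp[OF i0 measurable_completion[OF gm] aeL] .
  have gi: "integrable lborel g"
    using giL integrable_completion[of g lborel] gm by simp
  have gb: "g \<in> borel_measurable borel" using gm by simp
  have gmL[measurable]: "g \<in> borel_measurable lebesgue" using measurable_completion[OF gm] .
  have f0m[measurable]: "f0 \<in> borel_measurable lebesgue" using i0 by auto
  have "AE x in lborel. g x = 0"
  proof (rule ae_zero_lborel[OF gb gi])
    fix x :: real
    have m1: "(\<lambda>y. indicator {x<..} y * g y) \<in> borel_measurable lborel" using gm by simp
    have "integral\<^sup>L lborel (\<lambda>y. indicator {x<..} y * g y) = integral\<^sup>L lebesgue (\<lambda>y. indicator {x<..} y * g y)"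
      using integral_completion[OF m1] by simp
    also have "\<dots> = integral\<^sup>L lebesgue (\<lambda>y. indicator {x<..} y * f0 y)"
    proof (rule integral_cong_AE)
      have xs: "{x<..} \<in> sets lebesgue" by simp
      show "(\<lambda>y. indicator {x<..} y * g y) \<in> borel_measurable lebesgue"
        using integrable_mult_indicator[OF xs giL] by simp
      show "(\<lambda>y. indicator {x<..} y * f0 y) \<in> borel_measurable lebesgue"
        using integrable_mult_indicator[OF xs i0] by simp
      show "AE y in lebesgue. indicator {x<..} y * g y = indicator {x<..} y * f0 y"
        using aeL by eventually_elim simp
    qed
    also have "\<dots> = 0"
    proof (cases "x < 0 \<or> L < x")
      case True
      show ?thesis
      proof (cases "x < 0")
        case True
        then have "(\<lambda>y. indicator {x<..} y * f0 y) = (\<lambda>y. indicator {0..L} y * d y)"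
          by (auto simp: f0_def indicator_def fun_eq_iff)
        then show ?thesis using z restr_integral[of "{0..L}" d]
          by (cases "0 \<le> L") (auto simp: indicator_def)
      next
        case False
        then have "(\<lambda>y. indicator {x<..} y * f0 y) = (\<lambda>y. 0)"
          using \<open>x < 0 \<or> L < x\<close> by (auto simp: f0_def indicator_def fun_eq_iff)
        then show ?thesis by simp
      qed
    next
      case False
      then have x: "0 \<le> x" "x \<le> L" by auto
      have "(\<lambda>y. indicator {x<..} y * f0 y) = (\<lambda>y. indicator {0..L} y * d y - indicator {0..x} y * d y)"
        using x by (auto simp: f0_def indicator_def fun_eq_iff)
      moreover have "integrable lebesgue (\<lambda>y. indicator {0..x} y * d y)"
        using integrable_subinterval[OF di, of 0 x] x restr_integrable[of "{0..x}" d] by simp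
      moreover have "integrable lebesgue (\<lambda>y. indicator {0..L} y * d y)"
        using i0 by (simp add: f0_def)
      ultimately show ?thesis
        using z x restr_integral[of "{0..L}" d] restr_integral[of "{0..x}" d] by simp
    qed
    finally show "integral\<^sup>L lborel (\<lambda>y. indicator {x<..} y * g y) = 0" .
  qed
  then have "AE x in lebesgue. g x = 0" by (rule AE_completion)
  with aeL have "AE x in lebesgue. x \<in> {0..L} \<longrightarrow> d x = 0"
    by eventually_elim (auto simp: f0_def indicator_def)
  then show ?thesis
    by (subst AE_restrict_space_iff) auto
qed

lemma lint_eq_int:
  fixes f :: "real \<Rightarrow> real"
  assumes "integrable (lebesgue_on {a..b}) f" "{c..d} \<subseteq> {a..b}"
  shows "integral\<^sup>L (lebesgue_on {c..d}) f = integral {c..d} f"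
  using integrable_subinterval[OF assms] by (simp add: lebesgue_integral_eq_integral)

lemma h2_basic:
  assumes H: "H2_weak L h h1 h2" and L: "0 \<le> L"
  shows "continuous_on {0..L} h1" "integrable (lebesgue_on {0..L}) h1"
    "\<forall>t\<in>{0..L}. h1 t = h1 0 + integral {0..t} h2"
    "\<forall>t\<in>{0..L}. h t = h 0 + integral {0..t} h1"
    "\<forall>t\<in>{0..L}. (h has_real_derivative h1 t) (at t within {0..L})"
    "continuous_on {0..L} h"
    "integrable (lebesgue_on {0..L}) h2" "h2 integrable_on {0..L}"
proof -
  have i2: "integrable (lebesgue_on {0..L}) h2" and e1: "\<forall>t\<in>{0..L}. h1 t = h1 0 + integral\<^sup>L (lebesgue_on {0..t}) h2"
    and e0: "\<forall>t\<in>{0..L}. h t = h 0 + integral\<^sup>L (lebesgue_on {0..t}) h1"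
    using H unfolding H2_weak_def by blast+
  show "integrable (lebesgue_on {0..L}) h2" by (fact i2)
  show "h2 integrable_on {0..L}" using integrable_on_lebesgue_on[OF i2] by simp
  have "continuous_on {0..L} (\<lambda>x. h1 0 + integral\<^sup>L (lebesgue_on {0..x}) h2)"
    by (intro continuous_intros indefinite_integral_continuous_real i2)
  then show c1: "continuous_on {0..L} h1"
  proof (rule continuous_on_eq)
    fix x assume x: "x \<in> {0..L}" show "h1 0 + integral\<^sup>L (lebesgue_on {0..x}) h2 = h1 x"
      using bspec[OF e1 x] by (rule sym)
  qed
  then show i1: "integrable (lebesgue_on {0..L}) h1"
    by (rule continuous_imp_integrable_real)
  show e1': "\<forall>t\<in>{0..L}. h1 t = h1 0 + integral {0..t} h2"
  proof
    fix t assume t: "t \<in> {0..L}"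
    have "h1 t = h1 0 + integral\<^sup>L (lebesgue_on {0..t}) h2" using e1 t by blast
    also have "integral\<^sup>L (lebesgue_on {0..t}) h2 = integral {0..t} h2" using lint_eq_int[OF i2] t by auto
    finally show "h1 t = h1 0 + integral {0..t} h2" .
  qed
  show e0': "\<forall>t\<in>{0..L}. h t = h 0 + integral {0..t} h1"
  proof
    fix t assume t: "t \<in> {0..L}"
    have "h t = h 0 + integral\<^sup>L (lebesgue_on {0..t}) h1" using e0 t by blast
    also have "integral\<^sup>L (lebesgue_on {0..t}) h1 = integral {0..t} h1" using lint_eq_int[OF i1] t by auto
    finally show "h t = h 0 + integral {0..t} h1" .
  qed
  show "\<forall>t\<in>{0..L}. (h has_real_derivative h1 t) (at t within {0..L})"
  proof
    fix t assume t: "t \<in> {0..L}"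
    have D: "((\<lambda>x. h 0 + integral {0..x} h1) has_real_derivative h1 t) (at t within {0..L})"
      using DERIV_add[OF DERIV_const integral_has_real_derivative[OF c1 t]] by simp
    show "(h has_real_derivative h1 t) (at t within {0..L})"
    proof (rule has_field_derivative_transform_within[OF D, where d=1])
      fix x assume x: "x \<in> {0..L}"
      show "h 0 + integral {0..x} h1 = h x" using bspec[OF e0' x] by (rule sym)
    qed (use t in auto)
  qed
  have "continuous_on {0..L} (\<lambda>x. h 0 + integral\<^sup>L (lebesgue_on {0..x}) h1)"
    by (intro continuous_intros indefinite_integral_continuous_real i1)
  then show "continuous_on {0..L} h"
  proof (rule continuous_on_eq)
    fix x assume x: "x \<in> {0..L}" show "h 0 + integral\<^sup>L (lebesgue_on {0..x}) h1 = h x"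
      using bspec[OF e0 x] by (rule sym)
  qed
qed


lemma h2_unique:
  assumes H: "H2_weak L h h1 h2" and G: "H2_weak L h g1 g2" and L: "0 < L"
  shows "\<forall>t\<in>{0..L}. h1 t = g1 t" "AE x in lebesgue_on {0..L}. h2 x = g2 x"
proof -
  note hb = h2_basic[OF H less_imp_le[OF L]]
  note gb = h2_basic[OF G less_imp_le[OF L]]
  show hg: "\<forall>t\<in>{0..L}. h1 t = g1 t"
  proof
    fix t assume t: "t \<in> {0..L}"
    have "(h has_vector_derivative h1 t) (at t within cbox 0 L)"
      using hb(5) t by (simp add: has_real_derivative_iff_has_vector_derivative)
    moreover have "(h has_vector_derivative g1 t) (at t within cbox 0 L)"
      using gb(5) t by (simp add: has_real_derivative_iff_has_vector_derivative)
    ultimately show "h1 t = g1 t"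
      using vector_derivative_unique_within_closed_interval[of 0 L t h "h1 t" "g1 t"] L t by simp
  qed
  have di: "integrable (lebesgue_on {0..L}) (\<lambda>x. h2 x - g2 x)"
    using hb(7) gb(7) by (rule Bochner_Integration.integrable_diff)
  have "AE x in lebesgue_on {0..L}. h2 x - g2 x = 0"
  proof (rule ae_zero_interval[OF di], rule ballI)
    fix t assume t: "t \<in> {0..L}"
    have s: "{0..t} \<subseteq> {0..L}" using t by auto
    have "integral\<^sup>L (lebesgue_on {0..t}) (\<lambda>x. h2 x - g2 x) = integral {0..t} (\<lambda>x. h2 x - g2 x)"
      by (rule lint_eq_int[OF di s])
    also have "\<dots> = integral {0..t} h2 - integral {0..t} g2"
      by (rule integral_diff) (use integrable_subinterval_real[OF hb(8) s] integrable_subinterval_real[OF gb(8) s] in auto)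
    also have "integral {0..t} h2 = h1 t - h1 0" using bspec[OF hb(3) t] by simp
    also have "integral {0..t} g2 = g1 t - g1 0" using bspec[OF gb(3) t] by simp
    also have "h1 t - h1 0 - (g1 t - g1 0) = 0" using hg t L by auto
    finally show "integral\<^sup>L (lebesgue_on {0..t}) (\<lambda>x. h2 x - g2 x) = 0" .
  qed
  then show "AE x in lebesgue_on {0..L}. h2 x = g2 x" by eventually_elim simp
qed

lemma bending_eq:
  assumes H: "H2_weak L h h1 h2" and L: "0 < L"
  shows "bending L h = integral\<^sup>L (lebesgue_on {0..L}) (\<lambda>t. (h2 t)\<^sup>2) / 2"
proof -
  define s where "s = (SOME h2. \<exists>h1. H2_weak L h h1 h2)"
  have "\<exists>h1. H2_weak L h h1 s" unfolding s_def using someI_ex[of "\<lambda>h2. \<exists>h1. H2_weak L h h1 h2"] H by blast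
  then obtain s1 where S: "H2_weak L h s1 s" by blast
  have ae: "AE x in lebesgue_on {0..L}. h2 x = s x" using h2_unique(2)[OF H S L] .
  have i1: "integrable (lebesgue_on {0..L}) (\<lambda>t. (h2 t)\<^sup>2)" using H unfolding H2_weak_def by blast
  have i2: "integrable (lebesgue_on {0..L}) (\<lambda>t. (s t)\<^sup>2)" using S unfolding H2_weak_def by blast
  have "integral\<^sup>L (lebesgue_on {0..L}) (\<lambda>t. (s t)\<^sup>2) = integral\<^sup>L (lebesgue_on {0..L}) (\<lambda>t. (h2 t)\<^sup>2)"
    by (rule integral_cong_AE) (use i1 i2 ae in auto)
  then show ?thesis unfolding bending_def s_def[symmetric] Let_def by simp
qed

lemma h2_restrict:
  assumes H: "H2_weak L h h1 h2" and l: "0 \<le> l" "l \<le> L"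
  shows "H2_weak l h h1 h2"
proof -
  have s: "{0..l} \<subseteq> {0..L}" using l by auto
  have a: "integrable (lebesgue_on {0..L}) h2" "integrable (lebesgue_on {0..L}) (\<lambda>t. (h2 t)\<^sup>2)"
    and b: "\<forall>t\<in>{0..L}. h1 t = h1 0 + integral\<^sup>L (lebesgue_on {0..t}) h2"
    "\<forall>t\<in>{0..L}. h t = h 0 + integral\<^sup>L (lebesgue_on {0..t}) h1"
    using H unfolding H2_weak_def by blast+
  show ?thesis unfolding H2_weak_def
    using integrable_subinterval[OF a(1) s] integrable_subinterval[OF a(2) s] b s by blast
qed

lemma zero_set_lmeasurable:
  assumes H: "H2_weak 1 g g1 g2"
  shows "{t\<in>{0..1}. g t = (0::real)} \<in> lmeasurable"
proof -
  have "continuous_on {0..1} g" using h2_basic(6)[OF H] by simp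
  then have "closed {t\<in>{0..1}. g t = 0}" by (rule continuous_closed_preimage_constant) simp
  moreover have "bounded {t\<in>{0..1::real}. g t = 0}" by (rule bounded_subset[of "{0..1}"]) auto
  ultimately show ?thesis by (intro lmeasurable_compact) (simp add: compact_eq_bounded_closed)
qed

lemma lint_const: "0 \<le> t \<Longrightarrow> integral\<^sup>L (lebesgue_on {0..t}) (\<lambda>_. c) = c * (t::real)"
  using lint_eq_int[of 0 t "\<lambda>_. c" 0 t] continuous_imp_integrable_real[of 0 t "\<lambda>_. c"] by simp

lemma h2_linear: "H2_weak 1 (\<lambda>t. a + \<alpha> * t) (\<lambda>t. \<alpha>) (\<lambda>t. 0)"
  unfolding H2_weak_def
proof (intro conjI ballI)
  fix t :: real assume t: "t \<in> {0..1}"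
  show "\<alpha> = \<alpha> + integral\<^sup>L (lebesgue_on {0..t}) (\<lambda>t. 0)" by simp
  have "integral\<^sup>L (lebesgue_on {0..t}) (\<lambda>_. \<alpha>) = \<alpha> * t" by (rule lint_const) (use t in simp)
  then show "a + \<alpha> * t = a + \<alpha> * 0 + integral\<^sup>L (lebesgue_on {0..t}) (\<lambda>t. \<alpha>)" by linarith
qed auto

lemma glue_fun: "(\<lambda>x::real. indicator {0..s} x * (if x \<le> l then f x else 0)) = (\<lambda>x. indicator {0..min s l} x * (f x::real))"
proof (rule ext)
  fix x :: real show "indicator {0..s} x * (if x \<le> l then f x else 0) = indicator {0..min s l} x * (f x::real)"
    by (cases "x \<le> l"; cases "s \<le> l"; cases "0 \<le> x"; cases "x \<le> s"; simp add: indicator_def min_def; linarith)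
qed

lemma glue_int:
  fixes f :: "real \<Rightarrow> real"
  shows "integral\<^sup>L (lebesgue_on {0..s}) (\<lambda>t. if t \<le> l then f t else 0) = integral\<^sup>L (lebesgue_on {0..min s l}) f"
    and "integrable (lebesgue_on {0..s}) (\<lambda>t. if t \<le> l then f t else 0) \<longleftrightarrow> integrable (lebesgue_on {0..min s l}) f"
  by (simp_all only: restr_integral[of "{0..s}"] restr_integral[of "{0..min s l}"]
      restr_integrable[of "{0..s}"] restr_integrable[of "{0..min s l}"] atLeastAtMost_borel sets_completionI_sets sets_lborel glue_fun)

lemma h2_glue:
  assumes G: "H2_weak l g g1 g2" and l: "0 \<le> l" "l \<le> 1" and gl: "g l = 0" "g1 l = 0"
  shows "H2_weak 1 (\<lambda>t. if t \<le> l then g t else 0) (\<lambda>t. if t \<le> l then g1 t else 0) (\<lambda>t. if t \<le> l then g2 t else 0)"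
    and "integral\<^sup>L (lebesgue_on {0..1}) (\<lambda>t. ((\<lambda>t. if t \<le> l then g2 t else 0) t)\<^sup>2) = integral\<^sup>L (lebesgue_on {0..l}) (\<lambda>t. (g2 t)\<^sup>2)"
proof -
  have a: "integrable (lebesgue_on {0..l}) g2" "integrable (lebesgue_on {0..l}) (\<lambda>t. (g2 t)\<^sup>2)"
    and b: "\<forall>t\<in>{0..l}. g1 t = g1 0 + integral\<^sup>L (lebesgue_on {0..t}) g2"
    "\<forall>t\<in>{0..l}. g t = g 0 + integral\<^sup>L (lebesgue_on {0..t}) g1"
    using G unfolding H2_weak_def by blast+
  have sq: "(\<lambda>t. ((\<lambda>t. if t \<le> l then g2 t else 0) t)\<^sup>2) = (\<lambda>t. if t \<le> l then (g2 t)\<^sup>2 else 0)"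
    by auto
  have ml: "min 1 l = l" using l by simp
  show "integral\<^sup>L (lebesgue_on {0..1}) (\<lambda>t. ((\<lambda>t. if t \<le> l then g2 t else 0) t)\<^sup>2) = integral\<^sup>L (lebesgue_on {0..l}) (\<lambda>t. (g2 t)\<^sup>2)"
    unfolding sq glue_int(1) ml ..
  show "H2_weak 1 (\<lambda>t. if t \<le> l then g t else 0) (\<lambda>t. if t \<le> l then g1 t else 0) (\<lambda>t. if t \<le> l then g2 t else 0)"
    unfolding H2_weak_def
  proof (intro conjI ballI)
    show "integrable (lebesgue_on {0..1}) (\<lambda>t. if t \<le> l then g2 t else 0)"
      unfolding glue_int(2) ml by (rule a(1))
    show "integrable (lebesgue_on {0..1}) (\<lambda>t. ((\<lambda>t. if t \<le> l then g2 t else 0) t)\<^sup>2)"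
      unfolding sq glue_int(2) ml by (rule a(2))
    fix t :: real assume t: "t \<in> {0..1}"
    have lm: "l \<in> {0..l}" using l by simp
    have el1: "g1 0 + integral\<^sup>L (lebesgue_on {0..l}) g2 = 0" using bspec[OF b(1) lm] gl(2) by linarith
    have el0: "g 0 + integral\<^sup>L (lebesgue_on {0..l}) g1 = 0" using bspec[OF b(2) lm] gl(1) by linarith
    show "(if t \<le> l then g1 t else 0) = (if 0 \<le> l then g1 0 else 0) + integral\<^sup>L (lebesgue_on {0..t}) (\<lambda>t. if t \<le> l then g2 t else 0)"
    proof (cases "t \<le> l")
      case True
      then have tm: "t \<in> {0..l}" "min t l = t" using t by auto
      show ?thesis unfolding glue_int(1) tm(2) using bspec[OF b(1) tm(1)] True l by simp
    next
      case False
      then have "min t l = l" by simp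
      then show ?thesis unfolding glue_int(1) using el1 l False by simp
    qed
    show "(if t \<le> l then g t else 0) = (if 0 \<le> l then g 0 else 0) + integral\<^sup>L (lebesgue_on {0..t}) (\<lambda>t. if t \<le> l then g1 t else 0)"
    proof (cases "t \<le> l")
      case True
      then have tm: "t \<in> {0..l}" "min t l = t" using t by auto
      show ?thesis unfolding glue_int(1) tm(2) using bspec[OF b(2) tm(1)] True l by simp
    next
      case False
      then have "min t l = l" by simp
      then show ?thesis unfolding glue_int(1) using el0 l False by simp
    qed
  qed
qed

lemma lint_const2: "a \<le> b \<Longrightarrow> integral\<^sup>L (lebesgue_on {a..b}) (\<lambda>_. c) = c * (b - (a::real))"
  using lint_eq_int[of a b "\<lambda>_. c" a b] continuous_imp_integrable_real[of a b "\<lambda>_. c"] by simp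

lemma h2_flat:
  assumes H: "H2_weak 1 h h1 h2" and l: "0 \<le> l" "l \<le> 1"
    and z: "integral\<^sup>L (lebesgue_on {l..1}) (\<lambda>t. (h2 t)\<^sup>2) = 0"
  shows "\<forall>t\<in>{l..1}. h1 t = h1 l \<and> h t = h l + h1 l * (t - l)"
proof -
  have a: "integrable (lebesgue_on {0..1}) h2" "integrable (lebesgue_on {0..1}) (\<lambda>t. (h2 t)\<^sup>2)"
    and b: "\<forall>t\<in>{0..1}. h1 t = h1 0 + integral\<^sup>L (lebesgue_on {0..t}) h2"
    "\<forall>t\<in>{0..1}. h t = h 0 + integral\<^sup>L (lebesgue_on {0..t}) h1"
    using H unfolding H2_weak_def by blast+
  have i1: "integrable (lebesgue_on {0..1}) h1" using h2_basic(2)[OF H] by simp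
  have isq: "integrable (lebesgue_on {l..1}) (\<lambda>t. (h2 t)\<^sup>2)"
    using integrable_subinterval[OF a(2), of l 1] l by simp
  have "AE x in lebesgue_on {l..1}. (h2 x)\<^sup>2 = 0"
    using integral_nonneg_eq_0_iff_AE[OF isq] z by simp
  then have ae: "AE x in lebesgue. x \<in> {l..1} \<longrightarrow> h2 x = 0"
    by (subst (asm) AE_restrict_space_iff) auto
  have lm: "l \<in> {0..1}" using l by simp
  have F1: "h1 t = h1 l" if t: "t \<in> {l..1}" for t
  proof -
    have tm: "t \<in> {0..1}" using t l by simp
    have "AE x in lebesgue_on {l..t}. h2 x = 0"
      by (subst AE_restrict_space_iff) (use ae t in \<open>auto elim!: eventually_mono\<close>)
    then have zt: "integral\<^sup>L (lebesgue_on {l..t}) h2 = 0" by (rule integral_eq_zero_AE)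
    have "integral\<^sup>L (lebesgue_on {0..t}) h2 = integral\<^sup>L (lebesgue_on {0..l}) h2 + integral\<^sup>L (lebesgue_on {l..t}) h2"
      by (rule integral_combine) (use integrable_subinterval[OF a(1), of 0 t] t l in auto)
    then show ?thesis using bspec[OF b(1) tm] bspec[OF b(1) lm] zt by linarith
  qed
  show ?thesis
  proof
    fix t assume t: "t \<in> {l..1}"
    have tm: "t \<in> {0..1}" using t l by simp
    have "integral\<^sup>L (lebesgue_on {l..t}) h1 = integral\<^sup>L (lebesgue_on {l..t}) (\<lambda>_. h1 l)"
    proof (rule Bochner_Integration.integral_cong)
      fix x assume "x \<in> space (lebesgue_on {l..t})"
      then have "x \<in> {l..1}" using t by auto
      then show "h1 x = h1 l" by (rule F1)
    qed simp
    also have "\<dots> = h1 l * (t - l)" using t by (intro lint_const2) simp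
    finally have zt: "integral\<^sup>L (lebesgue_on {l..t}) h1 = h1 l * (t - l)" .
    have "integral\<^sup>L (lebesgue_on {0..t}) h1 = integral\<^sup>L (lebesgue_on {0..l}) h1 + integral\<^sup>L (lebesgue_on {l..t}) h1"
      by (rule integral_combine) (use integrable_subinterval[OF i1, of 0 t] t l in auto)
    then show "h1 t = h1 l \<and> h t = h l + h1 l * (t - l)"
      using bspec[OF b(2) tm] bspec[OF b(2) lm] zt F1[OF t] by linarith
  qed
qed

lemma meas_Icc: "s \<le> t \<Longrightarrow> measure lebesgue {s..t::real} = t - s"
  by simp

lemma pos_meas_two_points:
  fixes A :: "real set"
  assumes "0 < measure lebesgue A"
  shows "\<exists>p q. p \<in> A \<and> q \<in> A \<and> p < q"
proof -
  have "infinite A"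
  proof
    assume "finite A"
    then have "negligible A" by (rule negligible_finite)
    then show False using assms negligible_imp_measure0[of A] by simp
  qed
  then obtain z1 where z1: "z1 \<in> A" by (metis finite.emptyI ex_in_conv)
  have "infinite (A - {z1})" using \<open>infinite A\<close> by simp
  then obtain z2 where z2: "z2 \<in> A - {z1}" by (metis finite.emptyI ex_in_conv)
  show ?thesis
  proof (cases "z1 < z2")
    case True then show ?thesis using z1 z2 by blast
  next
    case False then have "z2 < z1" using z2 by auto
    then show ?thesis using z1 z2 by blast
  qed
qed

lemma two_zeros:
  assumes H: "H2_weak 1 h h1 h2" and lt: "0 \<le> l" "l < t" "t \<le> 1"
    and pos: "0 < measure lebesgue ({x\<in>{0..1}. h x = 0} \<inter> {l..t})"
  shows "\<exists>z\<in>{l..t}. h z = 0" "\<exists>z\<in>{l..t}. h1 z = 0"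
proof -
  obtain p q where pq: "p \<in> {x\<in>{0..1}. h x = 0} \<inter> {l..t}" "q \<in> {x\<in>{0..1}. h x = 0} \<inter> {l..t}" "p < q"
    using pos_meas_two_points[OF pos] by blast
  then show "\<exists>z\<in>{l..t}. h z = 0" by blast
  have cont: "continuous_on {p..q} h"
    using h2_basic(6)[OF H] pq by (auto intro: continuous_on_subset)
  have der: "(h has_derivative (\<lambda>v. h1 x * v)) (at x)" if "p < x" "x < q" for x
  proof -
    have x: "x \<in> {0..1}" "x \<in> interior {0..1}" using that pq by auto
    have "(h has_real_derivative h1 x) (at x within {0..1})" using h2_basic(5)[OF H] x by simp
    then have "(h has_real_derivative h1 x) (at x)" using at_within_interior[OF x(2)] by simp
    then show ?thesis by (simp add: has_field_derivative_def mult_commute_abs)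
  qed
  obtain z where z: "p < z" "z < q" "(\<lambda>v. h1 z * v) = (\<lambda>v. 0)"
    using Rolle_deriv[OF pq(3) _ cont der] pq by auto
  then have "h1 z = 0" by (metis mult_cancel_left1 mult_zero_left)
  then show "\<exists>z\<in>{l..t}. h1 z = 0" using z pq by (intro bexI[of _ z]) auto
qed

lemma zero_accum:
  assumes H: "H2_weak 1 h h1 h2" and l: "0 \<le> l" "l < 1"
    and pos: "\<And>t. l < t \<Longrightarrow> t \<le> 1 \<Longrightarrow> 0 < measure lebesgue ({x\<in>{0..1}. h x = 0} \<inter> {l..t})"
  shows "h l = 0" "h1 l = 0"
proof -
  have lm: "l \<in> {0..1}" using l by simp
  have key: "f l = 0" if cf: "continuous_on {0..1} f" and ex: "\<And>t. l < t \<Longrightarrow> t \<le> 1 \<Longrightarrow> \<exists>z\<in>{l..t}. f z = 0"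
    for f :: "real \<Rightarrow> real"
  proof (rule ccontr)
    assume nz: "f l \<noteq> 0"
    then have "0 < \<bar>f l\<bar>" by simp
    with cf lm obtain d where d: "0 < d" "\<forall>x\<in>{0..1}. dist x l < d \<longrightarrow> dist (f x) (f l) < \<bar>f l\<bar>"
      unfolding continuous_on_iff by blast
    define t where "t = min 1 (l + d / 2)"
    have t: "l < t" "t \<le> 1" using d l by (auto simp: t_def)
    obtain z where z: "z \<in> {l..t}" "f z = 0" using ex[OF t] by blast
    have "z \<in> {0..1}" "dist z l < d" using z t l d by (auto simp: t_def dist_real_def)
    then have "dist (f z) (f l) < \<bar>f l\<bar>" using d by blast
    then show False using z by (simp add: dist_real_def)
  qed
  show "h l = 0"
    by (rule key) (use h2_basic(6)[OF H] two_zeros(1)[OF H l(1) _ _ pos] in auto)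
  show "h1 l = 0"
    by (rule key) (use h2_basic(1)[OF H] two_zeros(2)[OF H l(1) _ _ pos] in auto)
qed

lemma sq_int_nonneg: "0 \<le> integral\<^sup>L (lebesgue_on S) (\<lambda>t. (f t)\<^sup>2::real)"
  by (rule Bochner_Integration.integral_nonneg) simp

lemma glue_in_H2a:
  assumes G: "H2_weak l g g1 g2" and l: "0 \<le> l" "l \<le> 1" and gl: "g l = 0" "g1 l = 0"
    and g0: "g 0 = a" "g1 0 = \<alpha>"
  shows "(\<lambda>t. if t \<le> l then g t else 0) \<in> H2a a \<alpha>"
  unfolding H2a_def using h2_glue(1)[OF G l gl] l g0 by force

lemma glue_zero_set:
  assumes G: "H2_weak l g g1 g2" and l: "0 \<le> l" "l \<le> 1" and gl: "g l = 0" "g1 l = 0"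
  shows "1 - l \<le> measure lebesgue {t\<in>{0..1}. (\<lambda>t. if t \<le> l then g t else 0) t = 0}"
proof -
  have "measure lebesgue {l..1} \<le> measure lebesgue {t\<in>{0..1}. (\<lambda>t. if t \<le> l then g t else 0) t = 0}"
    by (rule measure_mono_fmeasurable) (use zero_set_lmeasurable[OF h2_glue(1)[OF G l gl]] l gl in auto)
  then show ?thesis using l by simp
qed

lemma glue_Sigma:
  assumes G: "H2_weak l g g1 g2" and l: "0 < l" "l \<le> 1" and gl: "g l = 0" "g1 l = 0" and tau: "0 \<le> \<tau>"
  shows "Sigma_f \<tau> (\<lambda>t. if t \<le> l then g t else 0) \<le> bending l g - \<tau> * (1 - l)"
proof -
  have l0: "0 \<le> l" using l by simp
  have "bending 1 (\<lambda>t. if t \<le> l then g t else 0) = bending l g"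
    using bending_eq[OF h2_glue(1)[OF G l0 l(2) gl]] h2_glue(2)[OF G l0 l(2) gl] bending_eq[OF G l(1)] by simp
  moreover have "\<tau> * (1 - l) \<le> \<tau> * measure lebesgue {t\<in>{0..1}. (\<lambda>t. if t \<le> l then g t else 0) t = 0}"
    by (rule mult_left_mono[OF glue_zero_set[OF G l0 l(2) gl] tau])
  ultimately show ?thesis unfolding Sigma_f_def by linarith
qed

theorem proposition2p1:
  fixes a \<alpha> \<epsilon> :: real and \<tau> :: "real \<Rightarrow> real" and h :: "real \<Rightarrow> real"
  assumes "\<epsilon> \<ge> 0" and "\<tau> \<epsilon> \<ge> 0"
    and "is_minimiser (\<tau> \<epsilon>) a \<alpha> h"
  shows "(\<forall>t\<in>{0..1}. h t = a + \<alpha> * t) \<or>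
         (\<exists>l\<in>{0<..<1}. \<exists>c. is_clamped_min l a \<alpha> c \<and>
             (\<forall>t\<in>{0..<l}. h t = c t) \<and> (\<forall>t\<in>{l..1}. h t = 0))"
proof -
  define T where "T = \<tau> \<epsilon>"
  have T: "0 \<le> T" using assms(2) by (simp add: T_def)
  obtain h1 h2 where H: "H2_weak 1 h h1 h2" and h0: "h 0 = a" "h1 0 = \<alpha>"
    using assms(3) unfolding is_minimiser_def H2a_def by blast
  have minp: "\<And>g. g \<in> H2a a \<alpha> \<Longrightarrow> Sigma_f T h \<le> Sigma_f T g"
    using assms(3) unfolding is_minimiser_def T_def by blast
  define Z where "Z = {t\<in>{0..1}. h t = 0}"
  have Zm: "Z \<in> lmeasurable" unfolding Z_def by (rule zero_set_lmeasurable[OF H])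
  define I where "I = (\<lambda>l. integral\<^sup>L (lebesgue_on {0..l}) (\<lambda>t. (h2 t)\<^sup>2))"
  define J where "J = (\<lambda>l. integral\<^sup>L (lebesgue_on {l..1}) (\<lambda>t. (h2 t)\<^sup>2))"
  have isq: "integrable (lebesgue_on {0..1}) (\<lambda>t. (h2 t)\<^sup>2)" using H unfolding H2_weak_def by blast
  have split: "I 1 = I l + J l" if "0 \<le> l" "l \<le> 1" for l
    unfolding I_def J_def by (rule integral_combine[OF isq that])
  have Sh: "Sigma_f T h = I 1 / 2 - T * measure lebesgue Z"
    unfolding Sigma_f_def Z_def I_def using bending_eq[OF H] by simp
  show ?thesis
  proof (cases "measure lebesgue Z = 0")
    case True
    have lin: "(\<lambda>t. a + \<alpha> * t) \<in> H2a a \<alpha>" unfolding H2a_def using h2_linear[of a \<alpha>] by force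
    have "Sigma_f T (\<lambda>t. a + \<alpha> * t) = - T * measure lebesgue {t\<in>{0..1}. a + \<alpha> * t = 0}"
      unfolding Sigma_f_def using bending_eq[OF h2_linear[of a \<alpha>]] by simp
    also have "\<dots> \<le> 0" using T by simp
    finally have "I 1 \<le> 0" using minp[OF lin] Sh True by simp
    moreover have "0 \<le> I 1" unfolding I_def by (rule sq_int_nonneg)
    moreover have "0 \<le> I 0" "0 \<le> J 0" unfolding I_def J_def by (rule sq_int_nonneg)+
    ultimately have "J 0 = 0" using split[of 0] by linarith
    then have fl: "\<forall>t\<in>{0..1}. h1 t = h1 0 \<and> h t = h 0 + h1 0 * (t - 0)"
      unfolding J_def by (intro h2_flat[OF H]) simp_all
    have "\<forall>t\<in>{0..1}. h t = a + \<alpha> * t"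
    proof
      fix t :: real assume t: "t \<in> {0..1}"
      have "h t = h 0 + h1 0 * (t - 0)" using bspec[OF fl t] by blast
      then show "h t = a + \<alpha> * t" using h0 by simp
    qed
    then show ?thesis by blast
  next
    case False
    then have Zpos: "0 < measure lebesgue Z" using measure_nonneg[of lebesgue Z] by linarith
    define F where "F = (\<lambda>t. measure lebesgue (Z \<inter> {0..t}))"
    have ZIm: "Z \<inter> {s..t} \<in> lmeasurable" for s t using Zm by (intro fmeasurable.Int) auto
    have Fmono: "F s \<le> F t" if "s \<le> t" for s t
      unfolding F_def by (rule measure_mono_fmeasurable) (use that ZIm in auto)
    have Fstep: "F t \<le> F s + measure lebesgue (Z \<inter> {s..t})" if "0 \<le> s" "s \<le> t" for s t
    proof -
      have "F t \<le> measure lebesgue ((Z \<inter> {0..s}) \<union> (Z \<inter> {s..t}))"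
        unfolding F_def by (rule measure_mono_fmeasurable) (use that ZIm in auto)
      also have "\<dots> \<le> F s + measure lebesgue (Z \<inter> {s..t})"
        unfolding F_def by (rule measure_Un_le) (use ZIm in auto)
      finally show ?thesis .
    qed
    have Fsmall: "measure lebesgue (Z \<inter> {s..t}) \<le> t - s" if "s \<le> t" for s t
    proof -
      have "measure lebesgue (Z \<inter> {s..t}) \<le> measure lebesgue {s..t}"
        by (rule measure_mono_fmeasurable) (use ZIm in auto)
      then show ?thesis using that by simp
    qed
    define S where "S = {t\<in>{0..1}. 0 < F t}"
    define l where "l = Inf S"
    have "Z \<inter> {0..1} = Z" unfolding Z_def by auto
    then have F1: "F 1 = measure lebesgue Z" unfolding F_def by simp
    have S1: "1 \<in> S" using Zpos F1 by (simp add: S_def)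
    have Sne: "S \<noteq> {}" using S1 by blast
    have Sbdd: "bdd_below S" unfolding S_def by (rule bdd_belowI[of _ 0]) auto
    have l0: "0 \<le> l" unfolding l_def by (rule cInf_greatest[OF Sne]) (auto simp: S_def)
    have l1: "l \<le> 1" unfolding l_def by (rule cInf_lower[OF S1 Sbdd])
    have Fl: "F l = 0"
    proof (rule ccontr)
      assume "F l \<noteq> 0"
      then have Flp: "0 < F l" using measure_nonneg[of lebesgue "Z \<inter> {0..l}"] unfolding F_def by linarith
      show False
      proof (cases "l = 0")
        case True
        have "F l \<le> 0" using Fsmall[of 0 0] unfolding F_def True by simp
        then show False using Flp by simp
      next
        case False
        define s where "s = max 0 (l - F l / 2)"
        have s: "0 \<le> s" "s < l" "l - s \<le> F l / 2" using False l0 Flp unfolding s_def by (auto simp: max_def)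
        have "s \<notin> S"
        proof
          assume "s \<in> S" then have "l \<le> s" unfolding l_def by (rule cInf_lower[OF _ Sbdd])
          then show False using s by simp
        qed
        then have "F s \<le> 0" using s l1 by (auto simp: S_def)
        then have "F l \<le> l - s" using Fstep[of s l] Fsmall[of s l] s by linarith
        then show False using s Flp by linarith
      qed
    qed
    have l1': "l < 1" using l1 Fl F1 Zpos by (cases "l = 1") auto
    have pos: "0 < measure lebesgue ({x\<in>{0..1}. h x = 0} \<inter> {l..t})" if lt: "l < t" "t \<le> 1" for t
    proof -
      obtain s where s: "s \<in> S" "s < t" using cInf_less_iff[OF Sne Sbdd, of t] lt unfolding l_def by blast
      have "0 < F s" using s by (simp add: S_def)
      also have "\<dots> \<le> F t" using s by (intro Fmono) simp
      also have "\<dots> \<le> F l + measure lebesgue (Z \<inter> {l..t})" using Fstep[of l t] l0 lt by simp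
      finally show ?thesis using Fl by (simp add: Z_def)
    qed
    have hl: "h l = 0" "h1 l = 0" using zero_accum[OF H l0 l1' pos] by auto
    have Hl: "H2_weak l h h1 h2" by (rule h2_restrict[OF H l0 l1])
    define g where "g = (\<lambda>t. if t \<le> l then h t else 0)"
    have gH: "g \<in> H2a a \<alpha>" unfolding g_def by (rule glue_in_H2a[OF Hl l0 l1 hl h0])
    have mZ: "measure lebesgue Z \<le> 1 - l"
    proof -
      have "measure lebesgue Z \<le> measure lebesgue ((Z \<inter> {0..l}) \<union> (Z \<inter> {l..1}))"
        by (rule measure_mono_fmeasurable) (use ZIm Zm in \<open>auto simp: Z_def\<close>)
      also have "\<dots> \<le> F l + measure lebesgue (Z \<inter> {l..1})"
        unfolding F_def by (rule measure_Un_le) (use ZIm in auto)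
      finally show ?thesis using Fl Fsmall[OF l1] by linarith
    qed
    have Sg: "Sigma_f T g \<le> I l / 2 - T * (1 - l)"
    proof -
      have "bending 1 g = I l / 2"
        unfolding g_def I_def using bending_eq[OF h2_glue(1)[OF Hl l0 l1 hl]] h2_glue(2)[OF Hl l0 l1 hl] by simp
      moreover have "T * (1 - l) \<le> T * measure lebesgue {t\<in>{0..1}. g t = 0}"
        unfolding g_def by (rule mult_left_mono[OF glue_zero_set[OF Hl l0 l1 hl] T])
      ultimately show ?thesis unfolding Sigma_f_def by linarith
    qed
    have TZ: "T * measure lebesgue Z \<le> T * (1 - l)" by (rule mult_left_mono[OF mZ T])
    have "J l \<le> 0" using minp[OF gH] Sg Sh split[OF l0 l1] TZ by linarith
    moreover have "0 \<le> J l" unfolding J_def by (rule sq_int_nonneg)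
    ultimately have "J l = 0" by simp
    then have flat: "\<forall>t\<in>{l..1}. h1 t = h1 l \<and> h t = h l + h1 l * (t - l)"
      unfolding J_def by (intro h2_flat[OF H l0 l1])
    have hz: "\<forall>t\<in>{l..1}. h t = 0"
    proof
      fix t :: real assume t: "t \<in> {l..1}"
      have "h t = h l + h1 l * (t - l)" using bspec[OF flat t] by blast
      then show "h t = 0" using hl by simp
    qed
    show ?thesis
    proof (cases "l = 0")
      case True
      then have "a = 0" "\<alpha> = 0" using hl h0 by auto
      then show ?thesis using hz True by auto
    next
      case False
      then have lp: "0 < l" using l0 by simp
      have "is_clamped_min l a \<alpha> h"
        unfolding is_clamped_min_def
      proof (intro conjI ballI)
        show "h \<in> H2_clamped l a \<alpha>" unfolding H2_clamped_def using Hl h0 hl by blast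
        fix g' assume "g' \<in> H2_clamped l a \<alpha>"
        then obtain g1 g2 where G: "H2_weak l g' g1 g2" and g0: "g' 0 = a" "g1 0 = \<alpha>" and gl: "g' l = 0" "g1 l = 0"
          unfolding H2_clamped_def by blast
        have "Sigma_f T h \<le> Sigma_f T (\<lambda>t. if t \<le> l then g' t else 0)"
          by (rule minp[OF glue_in_H2a[OF G l0 l1 gl g0]])
        also have "\<dots> \<le> bending l g' - T * (1 - l)" by (rule glue_Sigma[OF G lp l1 gl T])
        finally have "Sigma_f T h \<le> bending l g' - T * (1 - l)" .
        moreover have "bending l h = I l / 2" unfolding I_def by (rule bending_eq[OF Hl lp])
        ultimately show "bending l h \<le> bending l g'" using Sh split[OF l0 l1] \<open>J l = 0\<close> TZ by linarith
      qed
      then show ?thesis using lp l1' hz by auto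
    qed
  qed
qed

end
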